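(* Let $\epsilon\in(0,1/2)$, $\eta\in(\epsilon,1-\epsilon)^{2p}$, $\xi_1,\omega_1,\xi_2,\omega_2\in(\epsilon,1-\epsilon)$ with $\xi_1\omega_1=\xi_2\omega_2$, and $\pi$ an everywhere positive probability mass function on $\{0,1\}^p$. Then $p^{\mathrm{ARN}}_{(\xi_1\eta,\omega_1)}(\gamma,\gamma')=p^{\mathrm{ARN}}_{(\xi_2\eta,\omega_2)}(\gamma,\gamma')$ for all $\gamma,\gamma'\in\{0,1\}^p$.
   Context: $\eta=(A,D)$, $c\eta=(cA,cD)$. Neighbourhood indicator distribution: $p^{\mathrm{RN}}_{\xi\eta}(k\mid\gamma)=\prod_j p_j(k_j\mid\gamma_j)$ with $p_j(1\mid0)=\xi A_j$, $p_j(0\mid0)=1-\xi A_j$, $p_j(1\mid1)=\xi D_j$, $p_j(0\mid1)=1-\xi D_j$. $N(\gamma,k)=\{\gamma^*:\gamma^*_j=\gamma_j\ \forall j\text{ with }k_j=0\}$, $p_k=\sum_jk_j$, $d_H$ Hamming distance, $q^{\mathrm{THIN}}_{\omega,k}(\gamma,\gamma')=\omega^{d_H(\gamma,\gamma')}(1-\omega)^{p_k-d_H(\gamma,\gamma')}\mathbb{I}\{\gamma'\in N(\gamma,k)\}$. ARN acceptance $\alpha^{\mathrm{ARN}}_{(\xi\eta,\omega),k}(\gamma,\gamma')=\min\{1,\frac{\pi(\gamma')p^{\mathrm{RN}}_{\xi\eta}(k\mid\gamma')q^{\mathrm{THIN}}_{\omega,k}(\gamma',\gamma)}{\pi(\gamma)p^{\mathrm{RN}}_{\xi\eta}(k\mid\gamma)q^{\mathrm{THIN}}_{\omega,k}(\gamma,\gamma')}\}$;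 ARN kernel for $\gamma'\ne\gamma$: $p^{\mathrm{ARN}}_{(\xi\eta,\omega)}(\gamma,\gamma')=\sum_kp^{\mathrm{RN}}_{\xi\eta}(k\mid\gamma)q^{\mathrm{THIN}}_{\omega,k}(\gamma,\gamma')\alpha^{\mathrm{ARN}}_{(\xi\eta,\omega),k}(\gamma,\gamma')$, and $p^{\mathrm{ARN}}(\gamma,\gamma)=1-\sum_{\gamma'\ne\gamma}p^{\mathrm{ARN}}(\gamma,\gamma')$. *)

theory Defs
  imports "HOL-Analysis.Analysis"
begin

text \<open>Binary vectors in {0,1}^p are modelled as functions 'p \<Rightarrow> bool on a finite
  index type 'p (with CARD('p) = p); True = 1, False = 0.
  eta = (A, D) with A, D :: 'p \<Rightarrow> real; xi*eta = (xi*A, xi*D).\<close>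

definition pRN :: "real \<Rightarrow> ('p::finite \<Rightarrow> real) \<Rightarrow> ('p \<Rightarrow> real) \<Rightarrow> ('p \<Rightarrow> bool) \<Rightarrow> ('p \<Rightarrow> bool) \<Rightarrow> real" where
  "pRN xi A D k g = (\<Prod>j\<in>UNIV.
     (if g j then (if k j then xi * D j else 1 - xi * D j)
             else (if k j then xi * A j else 1 - xi * A j)))"

definition nbhd :: "('p::finite \<Rightarrow> bool) \<Rightarrow> ('p \<Rightarrow> bool) \<Rightarrow> ('p \<Rightarrow> bool) set" where
  "nbhd g k = {g'. \<forall>j. \<not> k j \<longrightarrow> g' j = g j}"

definition hamming :: "('p::finite \<Rightarrow> bool) \<Rightarrow> ('p \<Rightarrow> bool) \<Rightarrow> nat" where
  "hamming g g' = card {j. g j \<noteq> g' j}"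

definition pk :: "('p::finite \<Rightarrow> bool) \<Rightarrow> nat" where
  "pk k = card {j. k j}"

definition qTHIN :: "real \<Rightarrow> ('p::finite \<Rightarrow> bool) \<Rightarrow> ('p \<Rightarrow> bool) \<Rightarrow> ('p \<Rightarrow> bool) \<Rightarrow> real" where
  "qTHIN w k g g' = w ^ hamming g g' * (1 - w) ^ (pk k - hamming g g') *
     (if g' \<in> nbhd g k then 1 else 0)"

definition alphaARN :: "(('p::finite \<Rightarrow> bool) \<Rightarrow> real) \<Rightarrow> real \<Rightarrow> ('p \<Rightarrow> real) \<Rightarrow> ('p \<Rightarrow> real) \<Rightarrow> real
    \<Rightarrow> ('p \<Rightarrow> bool) \<Rightarrow> ('p \<Rightarrow> bool) \<Rightarrow> ('p \<Rightarrow> bool) \<Rightarrow> real" where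
  "alphaARN \<pi> xi A D w k g g' = min 1
     ((\<pi> g' * pRN xi A D k g' * qTHIN w k g' g) / (\<pi> g * pRN xi A D k g * qTHIN w k g g'))"

definition pARN_off :: "(('p::finite \<Rightarrow> bool) \<Rightarrow> real) \<Rightarrow> real \<Rightarrow> ('p \<Rightarrow> real) \<Rightarrow> ('p \<Rightarrow> real) \<Rightarrow> real
    \<Rightarrow> ('p \<Rightarrow> bool) \<Rightarrow> ('p \<Rightarrow> bool) \<Rightarrow> real" where
  "pARN_off \<pi> xi A D w g g' = (\<Sum>k\<in>UNIV.
     pRN xi A D k g * qTHIN w k g g' * alphaARN \<pi> xi A D w k g g')"

definition pARN :: "(('p::finite \<Rightarrow> bool) \<Rightarrow> real) \<Rightarrow> real \<Rightarrow> ('p \<Rightarrow> real) \<Rightarrow> ('p \<Rightarrow> real) \<Rightarrow> real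
    \<Rightarrow> ('p \<Rightarrow> bool) \<Rightarrow> ('p \<Rightarrow> bool) \<Rightarrow> real" where
  "pARN \<pi> xi A D w g g' =
     (if g' \<noteq> g then pARN_off \<pi> xi A D w g g'
      else 1 - (\<Sum>g''\<in>UNIV - {g}. pARN_off \<pi> xi A D w g g''))"

end

theory Submission
  imports Defs "HOL-Library.FuncSet"
begin

lemma sum_prod_bool:
  fixes f :: "'p::finite \<Rightarrow> bool \<Rightarrow> real"
  shows "(\<Sum>k\<in>(UNIV::('p \<Rightarrow> bool) set). \<Prod>j\<in>UNIV. f j (k j)) = (\<Prod>j\<in>UNIV. f j True + f j False)"
proof -
  have "(\<Prod>j\<in>UNIV. f j True + f j False) = (\<Prod>j\<in>UNIV. \<Sum>y\<in>UNIV. f j y)"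
    by (simp add: UNIV_bool add.commute)
  also have "\<dots> = (\<Sum>k\<in>PiE UNIV (\<lambda>_. UNIV). \<Prod>j\<in>UNIV. f j (k j))"
    by (rule prod_sum_PiE) auto
  finally show ?thesis by simp
qed

lemma prod_if_const:
  fixes c :: real
  shows "(\<Prod>j\<in>(UNIV::'p::finite set). if P j then c else 1) = c ^ card {j. P j}"
  by (simp add: prod.If_cases Collect_conv_if)

lemma min_lemma:
  fixes P q a b P' :: real
  assumes "P > 0" "q > 0" "a > 0"
  shows "P * q * min 1 ((b * P' * q) / (a * P * q)) = q * min P (b / a * P')"
proof -
  have e: "(b * P' * q) / (a * P * q) = (b / a * P') / P" using assms by (simp add: field_simps)
  show ?thesis unfolding e using assms
    by (cases "b / a * P' \<le> P") (auto simp: min_def field_simps)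
qed

lemma qTHIN_sym: "qTHIN w k g g' = qTHIN w k g' g"
proof -
  have "hamming g g' = hamming g' g" unfolding hamming_def by (metis (full_types))
  moreover have "(g' \<in> nbhd g k) = (g \<in> nbhd g' k)" unfolding nbhd_def by auto
  ultimately show ?thesis unfolding qTHIN_def by simp
qed

lemma off_formula:
  fixes A D :: "'p::finite \<Rightarrow> real"
  assumes A: "\<forall>j. 0 < A j \<and> A j < 1" and D: "\<forall>j. 0 < D j \<and> D j < 1"
    and xi: "0 < xi" "xi < 1" and w: "0 < w" "w < 1"
    and pg: "\<pi> g > 0" and pg': "\<pi> g' > 0"
  shows "pARN_off \<pi> xi A D w g g' =
    min (\<Prod>j\<in>UNIV. if g j \<noteq> g' j then (if g j then D j else A j) else 1)
        (\<pi> g' / \<pi> g * (\<Prod>j\<in>UNIV. if g j \<noteq> g' j then (if g' j then D j else A j) else 1))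
    * (\<Prod>j\<in>UNIV. if g j \<noteq> g' j then xi * w else 1 - xi * w * (if g j then D j else A j))"
proof -
  define a where "a j = (if g j then D j else A j)" for j
  define b where "b j = (if g' j then D j else A j)" for j
  define S where "S = {j. g j \<noteq> g' j}"
  have a: "0 < a j" "a j < 1" for j using A D unfolding a_def by auto
  have b: "0 < b j" "b j < 1" for j using A D unfolding b_def by auto
  have ab: "j \<notin> S \<Longrightarrow> a j = b j" for j unfolding S_def a_def b_def by auto
  have xa: "0 < xi * a j" "xi * a j < 1" for j using a xi
    by (auto intro: mult_pos_pos) (metis a(2) less_trans mult_less_cancel_left2 mult_strict_right_mono xi(1) a(1) less_le_not_le)
  have xb: "0 < xi * b j" "xi * b j < 1" for j using b xi
    by (auto intro: mult_pos_pos) (metis b(2) less_trans mult_less_cancel_left2 mult_strict_right_mono xi(1) b(1) less_le_not_le)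
  define M where "M = min (\<Prod>j\<in>UNIV. if j \<in> S then a j else 1)
        (\<pi> g' / \<pi> g * (\<Prod>j\<in>UNIV. if j \<in> S then b j else 1))"
  define \<psi> where "\<psi> j c = (if j \<in> S then (if c then xi * w else 0)
      else (if c then xi * (1 - w) * a j else 1 - xi * a j))" for j c
  have T: "pRN xi A D k g * qTHIN w k g g' * alphaARN \<pi> xi A D w k g g'
     = M * (\<Prod>j\<in>UNIV. \<psi> j (k j))" for k
  proof (cases "S \<subseteq> {j. k j}")
    case False
    then obtain j0 where j0: "j0 \<in> S" "\<not> k j0" by auto
    have "g' \<notin> nbhd g k" using j0 unfolding nbhd_def S_def by auto
    hence "qTHIN w k g g' = 0" unfolding qTHIN_def by simp
    moreover have "(\<Prod>j\<in>UNIV. \<psi> j (k j)) = 0"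
      using j0 by (subst prod_zero_iff) (auto simp: \<psi>_def intro!: bexI[of _ j0])
    ultimately show ?thesis by simp
  next
    case True
    have PG: "pRN xi A D k g = (\<Prod>j\<in>UNIV. if k j then xi * a j else 1 - xi * a j)"
      unfolding pRN_def a_def by (rule prod.cong) auto
    have PG': "pRN xi A D k g' = (\<Prod>j\<in>UNIV. if k j then xi * b j else 1 - xi * b j)"
      unfolding pRN_def b_def by (rule prod.cong) auto
    have Ppos: "pRN xi A D k g > 0" unfolding PG using xa
      by (intro prod_pos) (auto simp: less_le_not_le)
    have inN: "g' \<in> nbhd g k" using True unfolding nbhd_def S_def by auto
    have hS: "hamming g g' = card S" unfolding hamming_def S_def by simp
    have cK: "pk k - card S = card ({j. k j} - S)"
      unfolding pk_def by (simp add: card_Diff_subset True)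
    define q where "q = (\<Prod>j\<in>UNIV. if j \<in> S then w else if k j then 1 - w else 1)"
    have q: "qTHIN w k g g' = q"
    proof -
      have "q = (\<Prod>j\<in>UNIV. (if j \<in> S then w else 1) * (if j \<in> {j. k j} - S then 1 - w else 1))"
        unfolding q_def by (rule prod.cong) auto
      also have "\<dots> = w ^ card {j. j \<in> S} * (1 - w) ^ card {j. j \<in> {j. k j} - S}"
        by (simp add: prod.distrib prod_if_const del: Collect_mem_eq)
      finally show ?thesis unfolding qTHIN_def using inN hS cK by (simp add: set_diff_eq)
    qed
    have qpos: "q > 0" unfolding q_def using w by (intro prod_pos) auto
    define C where "C = (\<Prod>j\<in>UNIV. if j \<in> S then 1 else if k j then xi * a j else 1 - xi * a j)"
    define X where "X = (\<Prod>j\<in>UNIV. if j \<in> S then xi else 1)"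
    define Aa where "Aa = (\<Prod>j\<in>UNIV. if j \<in> S then a j else 1)"
    define Ab where "Ab = (\<Prod>j\<in>UNIV. if j \<in> S then b j else 1)"
    have Cpos: "C > 0" unfolding C_def using xa by (intro prod_pos) (auto simp: less_le_not_le)
    have Xpos: "X > 0" unfolding X_def using xi by (intro prod_pos) auto
    have P1: "pRN xi A D k g = X * Aa * C"
    proof -
      have "X * Aa * C = (\<Prod>j\<in>UNIV. (if j \<in> S then xi else 1) * (if j \<in> S then a j else 1)
           * (if j \<in> S then 1 else if k j then xi * a j else 1 - xi * a j))"
        unfolding X_def Aa_def C_def by (simp add: prod.distrib)
      also have "\<dots> = pRN xi A D k g" unfolding PG by (rule prod.cong) (use True in auto)
      finally show ?thesis by simp
    qed
    have P2: "pRN xi A D k g' = X * Ab * C"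
    proof -
      have "X * Ab * C = (\<Prod>j\<in>UNIV. (if j \<in> S then xi else 1) * (if j \<in> S then b j else 1)
           * (if j \<in> S then 1 else if k j then xi * a j else 1 - xi * a j))"
        unfolding X_def Ab_def C_def by (simp add: prod.distrib)
      also have "\<dots> = pRN xi A D k g'" unfolding PG' by (rule prod.cong) (use True ab in auto)
      finally show ?thesis by simp
    qed
    have "pRN xi A D k g * qTHIN w k g g' * alphaARN \<pi> xi A D w k g g'
       = q * min (pRN xi A D k g) (\<pi> g' / \<pi> g * pRN xi A D k g')"
      unfolding alphaARN_def qTHIN_sym[of w k g' g] q
      by (rule min_lemma[OF Ppos qpos pg])
    also have "\<dots> = q * X * C * M"
    proof -
      have "min (X * Aa * C) (\<pi> g' / \<pi> g * (X * Ab * C)) = X * C * min Aa (\<pi> g' / \<pi> g * Ab)"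
      proof -
        have "X * Aa * C = (X * C) * Aa" "\<pi> g' / \<pi> g * (X * Ab * C) = (X * C) * (\<pi> g' / \<pi> g * Ab)"
          by (simp_all add: mult_ac)
        then show ?thesis using Xpos Cpos by (simp only: min_mult_distrib_left less_imp_le mult_pos_pos if_True)
      qed
      thus ?thesis unfolding P1 P2 M_def Aa_def Ab_def S_def by simp
    qed
    also have "q * X * C = (\<Prod>j\<in>UNIV. \<psi> j (k j))"
    proof -
      have "q * X * C = (\<Prod>j\<in>UNIV. (if j \<in> S then w else if k j then 1 - w else 1) * (if j \<in> S then xi else 1)
           * (if j \<in> S then 1 else if k j then xi * a j else 1 - xi * a j))"
        unfolding q_def X_def C_def by (simp add: prod.distrib)
      also have "\<dots> = (\<Prod>j\<in>UNIV. \<psi> j (k j))" unfolding \<psi>_def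
        by (rule prod.cong) (use True in auto)
      finally show ?thesis .
    qed
    finally show ?thesis by simp
  qed
  have "pARN_off \<pi> xi A D w g g' = M * (\<Sum>k\<in>UNIV. \<Prod>j\<in>UNIV. \<psi> j (k j))"
    unfolding pARN_off_def T by (simp add: sum_distrib_left)
  also have "\<dots> = M * (\<Prod>j\<in>UNIV. \<psi> j True + \<psi> j False)" by (simp add: sum_prod_bool)
  also have "(\<Prod>j\<in>UNIV. \<psi> j True + \<psi> j False) =
     (\<Prod>j\<in>UNIV. if g j \<noteq> g' j then xi * w else 1 - xi * w * (if g j then D j else A j))"
    by (rule prod.cong) (auto simp: \<psi>_def S_def a_def algebra_simps)
  finally show ?thesis unfolding M_def S_def a_def b_def by simp
qed

theorem corollary1:
  fixes \<epsilon> xi1 w1 xi2 w2 :: real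
    and A D :: "'p::finite \<Rightarrow> real"
    and \<pi> :: "('p \<Rightarrow> bool) \<Rightarrow> real"
  assumes "0 < \<epsilon>" "\<epsilon> < 1/2"
    and "\<forall>j. \<epsilon> < A j \<and> A j < 1 - \<epsilon>"
    and "\<forall>j. \<epsilon> < D j \<and> D j < 1 - \<epsilon>"
    and "\<epsilon> < xi1" "xi1 < 1 - \<epsilon>" "\<epsilon> < w1" "w1 < 1 - \<epsilon>"
    and "\<epsilon> < xi2" "xi2 < 1 - \<epsilon>" "\<epsilon> < w2" "w2 < 1 - \<epsilon>"
    and "xi1 * w1 = xi2 * w2"
    and "\<forall>g. 0 < \<pi> g"
    and "(\<Sum>g\<in>UNIV. \<pi> g) = 1"
  shows "\<forall>g g'. pARN \<pi> xi1 A D w1 g g' = pARN \<pi> xi2 A D w2 g g'"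
proof -
  have A: "\<forall>j. 0 < A j \<and> A j < 1" and D: "\<forall>j. 0 < D j \<and> D j < 1"
    using assms(1,3,4) by (smt (verit))+
  have off: "pARN_off \<pi> xi1 A D w1 g g' = pARN_off \<pi> xi2 A D w2 g g'" for g g'
  proof -
    have x1: "0 < xi1" "xi1 < 1" "0 < w1" "w1 < 1" "0 < xi2" "xi2 < 1" "0 < w2" "w2 < 1"
      using assms by linarith+
    note e1 = off_formula[OF A D x1(1,2,3,4), of \<pi> g g']
    note e2 = off_formula[OF A D x1(5,6,7,8), of \<pi> g g']
    show ?thesis using assms(14) by (simp only: e1 e2 assms(13))
  qed
  show ?thesis unfolding pARN_def off by simp
qed

end
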